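(* Let $f:\mathbb{R}^d\to\mathbb{R}$ be convex and differentiable with a minimizer $x_\ast$. Let $x_0\in\mathbb{R}^d$, $r_\epsilon>0$, and let $g_0,g_1,\dots$ be vectors in $\mathbb{R}^d$ (the (stochastic) gradients used at $x_0,x_1,\dots$). Consider the DoWG iterates $x_{k+1}=x_k-\eta_k g_k$ with \[ \eta_k=\frac{\overline{r}_k^2}{\sqrt{v_k}},\qquad \overline{r}_k=\max\Big(\max_{i\le k}\|x_i-x_0\|,\ r_\epsilon\Big),\qquad v_k=\sum_{i=0}^k \overline{r}_i^2\|g_i\|^2 . \] Let $d_k=\|x_k-x_\ast\|$ and $\overline{d}_t=\max_{k\le t} d_k$. Then for every $t$, \[ \sum_{k=0}^{t-1}\overline{r}_k^2\langle\nabla f(x_k),x_k-x_\ast\rangle \le 2\overline{r}_t\big[\overline{d}_t+\overline{r}_t\big]\sqrt{v_{t-1}}+\sum_{k=0}^{t-1}\overline{r}_k^2\langle\nabla f(x_k)-g_k,x_k-x_\ast\rangle . \]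
   Context: All norms are Euclidean. The stepsizes are assumed well defined (i.e., $v_k>0$). *)

theory Defs
  imports "HOL-Analysis.Analysis"
begin

definition dowg_rbar :: "(nat \<Rightarrow> 'a::euclidean_space) \<Rightarrow> real \<Rightarrow> nat \<Rightarrow> real" where
  "dowg_rbar x r_eps k = max (Max ((\<lambda>i. norm (x i - x 0)) ` {..k})) r_eps"

definition dowg_v :: "(nat \<Rightarrow> 'a::euclidean_space) \<Rightarrow> (nat \<Rightarrow> 'a) \<Rightarrow> real \<Rightarrow> nat \<Rightarrow> real" where
  "dowg_v x g r_eps k = (\<Sum>i\<le>k. (dowg_rbar x r_eps i)\<^sup>2 * (norm (g i))\<^sup>2)"

definition dowg_eta :: "(nat \<Rightarrow> 'a::euclidean_space) \<Rightarrow> (nat \<Rightarrow> 'a) \<Rightarrow> real \<Rightarrow> nat \<Rightarrow> real" where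
  "dowg_eta x g r_eps k = (dowg_rbar x r_eps k)\<^sup>2 / sqrt (dowg_v x g r_eps k)"

definition dbar :: "(nat \<Rightarrow> 'a::euclidean_space) \<Rightarrow> 'a \<Rightarrow> nat \<Rightarrow> real" where
  "dbar x xs t = Max ((\<lambda>k. norm (x k - xs)) ` {..t})"

end

theory Submission
  imports Defs
begin

lemma rbar_mono:
  assumes "k \<le> T"
  shows "dowg_rbar x r k \<le> dowg_rbar x r T"
proof -
  have "Max ((\<lambda>i. norm (x i - x 0)) ` {..k}) \<le> Max ((\<lambda>i. norm (x i - x 0)) ` {..T})"
    using assms by (intro Max_mono) auto
  then show ?thesis unfolding dowg_rbar_def by linarith
qed

lemma rbar_ge: "k \<le> T \<Longrightarrow> norm (x k - x 0) \<le> dowg_rbar x r T"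
proof -
  assume "k \<le> T"
  then have "norm (x k - x 0) \<le> Max ((\<lambda>i. norm (x i - x 0)) ` {..T})"
    by (intro Max_ge) auto
  then show ?thesis unfolding dowg_rbar_def by linarith
qed

lemma rbar_pos: "r > 0 \<Longrightarrow> dowg_rbar x r k > 0"
  unfolding dowg_rbar_def by linarith

lemma dbar_ge: "k \<le> T \<Longrightarrow> norm (x k - xs) \<le> dbar x xs T"
  unfolding dbar_def by (intro Max_ge) auto

lemma sqrt_step:
  fixes a w w' :: real
  assumes "w \<ge> 0" "w' > 0" "w'^2 = w^2 + a" "a \<ge> 0"
  shows "a / w' \<le> 2 * (w' - w)"
proof -
  have "w^2 \<le> w'^2" using assms(3,4) by linarith
  then have "w \<le> w'" using assms(2) by (rule power2_le_imp_le[OF _ less_imp_le])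
  have "a = (w' - w) * (w' + w)" using assms(3) by (simp add: algebra_simps power2_eq_square)
  also have "\<dots> \<le> (w' - w) * (2 * w')" using \<open>w \<le> w'\<close> by (intro mult_left_mono) auto
  finally have "a \<le> 2 * (w' - w) * w'" by (simp add: algebra_simps)
  then show ?thesis using assms(2) by (simp add: pos_divide_le_eq)
qed

lemma norm_sq_step:
  fixes e u :: "'a::real_inner"
  shows "(norm (e - s *\<^sub>R u))\<^sup>2 = (norm e)\<^sup>2 - 2 * s * (u \<bullet> e) + s\<^sup>2 * (norm u)\<^sup>2"
proof -
  have "(norm (e - s *\<^sub>R u))\<^sup>2 = (e - s *\<^sub>R u) \<bullet> (e - s *\<^sub>R u)"
    by (simp add: power2_norm_eq_inner)
  also have "\<dots> = e \<bullet> e - 2 * s * (u \<bullet> e) + s\<^sup>2 * (u \<bullet> u)"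
    by (simp add: inner_diff_left inner_diff_right inner_commute[of e u] power2_eq_square algebra_simps)
  finally show ?thesis by (simp add: power2_norm_eq_inner)
qed

theorem lemma4:
  fixes f :: "'a::euclidean_space \<Rightarrow> real"
    and grad :: "'a \<Rightarrow> 'a"
    and x g :: "nat \<Rightarrow> 'a"
    and xs :: 'a
    and r_eps :: real
    and t :: nat
  assumes convex: "convex_on UNIV f"
    and grad: "\<And>y. GDERIV f y :> grad y"
    and minimizer: "\<And>y. f xs \<le> f y"
    and r_eps_pos: "r_eps > 0"
    and v_pos: "\<And>k. dowg_v x g r_eps k > 0"
    and iter: "\<And>k. x (Suc k) = x k - dowg_eta x g r_eps k *\<^sub>R g k"
  shows "(\<Sum>k<t. (dowg_rbar x r_eps k)\<^sup>2 * (grad (x k) \<bullet> (x k - xs)))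
     \<le> 2 * dowg_rbar x r_eps t * (dbar x xs t + dowg_rbar x r_eps t)
         * sqrt (if t = 0 then 0 else dowg_v x g r_eps (t - 1))
       + (\<Sum>k<t. (dowg_rbar x r_eps k)\<^sup>2 * ((grad (x k) - g k) \<bullet> (x k - xs)))"
proof -
  define r where "r k = dowg_rbar x r_eps k" for k
  define a where "a k = (r k)\<^sup>2 * (norm (g k))\<^sup>2" for k
  define w where "w k = sqrt (\<Sum>i<k. a i)" for k
  define S where "S n = (\<Sum>k<n. (r k)\<^sup>2 * (g k \<bullet> (x k - xs)))" for n
  define dd where "dd k = norm (x k - xs)" for k
  define R where "R = r t"
  define D where "D = dbar x xs t"
  define c where "c = (dd t)\<^sup>2"
  have vw: "sqrt (dowg_v x g r_eps k) = w (Suc k)" for k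
    unfolding w_def dowg_v_def a_def r_def lessThan_Suc_atMost ..
  have wt: "sqrt (if t = 0 then 0 else dowg_v x g r_eps (t - 1)) = w t"
    proof (cases t)
    case 0 then show ?thesis by (simp add: w_def)
  next
    case (Suc m) then show ?thesis using vw[of m] by simp
  qed
  have wpos: "w (Suc k) > 0" for k
  proof -
    have "sqrt (dowg_v x g r_eps k) > 0" using v_pos[of k] by simp
    then show ?thesis unfolding vw .
  qed
  have wnn: "w k \<ge> 0" for k unfolding w_def a_def by (intro real_sqrt_ge_zero sum_nonneg) auto
  have wsq: "(w (Suc k))\<^sup>2 = (w k)\<^sup>2 + a k" for k
    unfolding w_def a_def by (simp add: sum_nonneg)
  have rpos: "r k > 0" for k unfolding r_def using rbar_pos[OF r_eps_pos] .
  have R0: "R \<ge> 0" unfolding R_def using rpos[of t] by simp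
  have D0: "D \<ge> 0" unfolding D_def using dbar_ge[of 0 t x xs] norm_ge_zero[of "x 0 - xs"] by linarith
  have key: "S n + (1/2) * w n * ((dd n)\<^sup>2 - c) \<le> (2*R*D + R^2) * w n" if "n \<le> t" for n
    using that
  proof (induction n)
    case 0
    then show ?case by (simp add: S_def w_def)
  next
    case (Suc n)
    then have nt: "n \<le> t" by simp
    define e where "e = x n - xs"
    define W where "W = w (Suc n)"
    have W0: "W > 0" unfolding W_def by (rule wpos)
    have eta: "dowg_eta x g r_eps n = (r n)\<^sup>2 / W"
      unfolding dowg_eta_def W_def r_def vw ..
    have xe: "x (Suc n) - xs = e - ((r n)\<^sup>2 / W) *\<^sub>R g n"
      unfolding e_def iter eta by simp
    have dsq: "(dd (Suc n))\<^sup>2 = (dd n)\<^sup>2 - 2 * ((r n)\<^sup>2 / W) * (g n \<bullet> e)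
        + ((r n)\<^sup>2 / W)\<^sup>2 * (norm (g n))\<^sup>2"
      unfolding dd_def xe e_def[symmetric] by (rule norm_sq_step)
    have ident: "(r n)\<^sup>2 * (g n \<bullet> e) = (W/2) * ((dd n)\<^sup>2 - (dd (Suc n))\<^sup>2)
        + (r n)\<^sup>2 * a n / (2 * W)"
      unfolding dsq a_def using W0 by (simp add: field_simps power2_eq_square)
    have S_Suc: "S (Suc n) = S n + (r n)\<^sup>2 * (g n \<bullet> e)"
      unfolding S_def e_def by simp
    have dcmp: "(dd n)\<^sup>2 - c \<le> 4 * R * D"
    proof (cases "dd n \<le> dd t")
      case True
      then have "(dd n)\<^sup>2 \<le> c" unfolding c_def dd_def by (simp add: power_mono)
      then show ?thesis using R0 D0 by (smt (verit) mult_nonneg_nonneg)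
    next
      case False
      have "dd n - dd t \<le> norm (x n - x t)" unfolding dd_def
        using norm_triangle_ineq2[of "x n - xs" "x t - xs"] by simp
      also have "\<dots> \<le> norm (x n - x 0) + norm (x t - x 0)"
        using norm_triangle_ineq4[of "x n - x 0" "x t - x 0"] by simp
      also have "\<dots> \<le> 2 * R" unfolding R_def r_def
        using rbar_ge[OF nt, of x r_eps] rbar_ge[of t t x r_eps] by simp
      finally have h1: "dd n - dd t \<le> 2 * R" .
      have h2: "dd n + dd t \<le> 2 * D" unfolding D_def dd_def
        using dbar_ge[OF nt, of x xs] dbar_ge[of t t x xs] by simp
      have "(dd n)\<^sup>2 - c = (dd n - dd t) * (dd n + dd t)"
        unfolding c_def by (simp add: algebra_simps power2_eq_square)
      also have "\<dots> \<le> (2 * R) * (2 * D)"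
        using h1 h2 False by (intro mult_mono) (auto simp: dd_def)
      finally show ?thesis by simp
    qed
    have rn: "(r n)\<^sup>2 \<le> R^2" unfolding R_def r_def
      using rbar_mono[OF nt, of x r_eps] rpos[of n] unfolding r_def
      by (intro power_mono) auto
    have aW: "a n / W \<le> 2 * (W - w n)"
      using sqrt_step[OF wnn[of n] W0] wsq[of n] unfolding W_def by (simp add: a_def)
    have an0: "a n / W \<ge> 0" unfolding a_def using W0 by simp
    have t2: "(r n)\<^sup>2 * a n / (2 * W) \<le> R^2 * (W - w n)"
    proof -
      have "(r n)\<^sup>2 * a n / (2 * W) = (1/2) * ((r n)\<^sup>2 * (a n / W))" by simp
      also have "\<dots> \<le> (1/2) * (R^2 * (2 * (W - w n)))"
        using rn aW an0 by (intro mult_left_mono mult_mono) auto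
      finally show ?thesis by (simp add: algebra_simps)
    qed
    have Wge: "W \<ge> w n" using aW an0 by simp
    have t1: "(1/2) * (W - w n) * ((dd n)\<^sup>2 - c) \<le> (1/2) * (W - w n) * (4*R*D)"
      using dcmp Wge by (intro mult_left_mono) auto
    have "S (Suc n) + (1/2) * W * ((dd (Suc n))\<^sup>2 - c)
        = (S n + (1/2) * w n * ((dd n)\<^sup>2 - c)) + (1/2) * (W - w n) * ((dd n)\<^sup>2 - c)
          + (r n)\<^sup>2 * a n / (2 * W)"
      unfolding S_Suc ident by (simp add: algebra_simps add_divide_distrib diff_divide_distrib)
    also have "\<dots> \<le> (2*R*D + R^2) * w n + (1/2) * (W - w n) * (4*R*D) + R^2 * (W - w n)"
      using Suc.IH[OF nt] t1 t2 by linarith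
    also have "\<dots> = (2*R*D + R^2) * W" by (simp add: algebra_simps diff_divide_distrib)
    finally show ?case unfolding W_def .
  qed
  have St: "S t \<le> (2*R*D + R^2) * w t" using key[of t] by (simp add: c_def)
  have split: "(\<Sum>k<t. (r k)\<^sup>2 * (grad (x k) \<bullet> (x k - xs)))
     = S t + (\<Sum>k<t. (r k)\<^sup>2 * ((grad (x k) - g k) \<bullet> (x k - xs)))"
    unfolding S_def by (simp add: sum.distrib[symmetric] inner_diff_left algebra_simps)
  show ?thesis unfolding wt r_def[symmetric] R_def[symmetric] D_def[symmetric] split
    using St mult_nonneg_nonneg[OF mult_nonneg_nonneg[OF R0 R0] wnn[of t]]
    by (simp add: algebra_simps power2_eq_square)
qed

end
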